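(* Let $\theta$ be a primitive aperiodic quasi-bijective substitution in simplified form, with notation as in the context. Then $S^{(2)}_\theta$ is invariant under diagonal right multiplication by elements of $\mathcal H_{-+}\cup\mathcal H_+$, i.e. $(L,R)\in S^{(2)}_\theta$ and $\psi\in\mathcal H_{-+}\cup\mathcal H_+$ imply $(L\psi,R\psi)\in S^{(2)}_\theta$. Furthermore, for every $\phi\in\mathcal H_{+-}$, the map $(L,R)\mapsto(L\phi,R\phi)$ is a bijection from $S^{(2)}_\theta$ onto the set $S^{(2,-)}_\theta$ of consecutive pairs $(L,R)\in\mathcal H_-\times\mathcal H_{+-}$.
   Context: A substitution $\theta$ of constant length $\ell$ on a finite alphabet $\mathcal A$ is given by maps $\theta_0,\dots,\theta_{\ell-1}:\mathcal A\to\mathcal A$ with $\theta(a)=\theta_0(a)\cdots\theta_{\ell-1}(a)$; the column maps $(\theta^n)_i$, $0\le i<\ell^n$, of $\theta^n$ are obtained by $(\theta\theta')_{i+\ell j}=\theta_i\theta'_j$ (composition of maps). The column rank $c$ is the minimum over $n,i$ of $|(\theta^n)_i(\mathcal A)|$. $\theta$ is quasi-bijective if for some power each column map has rank $c$; it is in simplified form if each $\theta_i$ has rank $c$ and every $\theta$-periodic point is $\theta$-fixed, so that $e_+:=\theta_0$ and $e_-:=\theta_{\ell-1}$ are idempotent maps. $S_\theta$ is the semigroup of maps $\mathcal A\to\mathcal A$ generated by all column maps of all $\theta^n$, $n\ge1$; it is completely simple and $e_\pm$ are minimal idempotents. $\mathcal H_+=e_+S_\theta e_+$ and $\mathcal H_-=e_-S_\theta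 e_-$ are groups; $e_{+-}$ is the unique idempotent in the group $\mathcal H_{+-}$ containing $e_+e_-$ (the intersection of the right ideal class of $e_+$ and left ideal class of $e_-$), and $e_{-+}$, $\mathcal H_{-+}$ are defined symmetrically (containing $e_-e_+$). Two elements $L,R\in S_\theta$ are consecutive if $L=(\theta^n)_{i-1}$, $R=(\theta^n)_i$ for some $n>0$, $0<i<\ell^n$. $S^{(2)}_\theta$ is the set of consecutive pairs $(L,R)\in\mathcal H_{-+}\times\mathcal H_+$. *)

theory Defs
  imports Main
begin

text \<open>A substitution of constant length l on the finite alphabet 'a is given by
  its column maps th 0, ..., th (l-1) :: 'a => 'a.  The column maps of th^n are
  col th l n k for k < l^n, following (th th')_(i + l j) = th_i o th'_j.\<close>

fun col :: "(nat \<Rightarrow> 'a \<Rightarrow> 'a) \<Rightarrow> nat \<Rightarrow> nat \<Rightarrow> nat \<Rightarrow> 'a \<Rightarrow> 'a" where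
  "col th l 0 k = id"
| "col th l (Suc n) k = th (k mod l) \<circ> col th l n (k div l)"

definition subst_word :: "(nat \<Rightarrow> 'a \<Rightarrow> 'a) \<Rightarrow> nat \<Rightarrow> nat \<Rightarrow> 'a \<Rightarrow> 'a list" where
  "subst_word th l n a = map (\<lambda>k. col th l n k a) [0..<l ^ n]"

definition primitive :: "(nat \<Rightarrow> 'a \<Rightarrow> 'a) \<Rightarrow> nat \<Rightarrow> bool" where
  "primitive th l \<longleftrightarrow> (\<exists>n\<ge>1. \<forall>a b. b \<in> set (subst_word th l n a))"

definition subst_lang :: "(nat \<Rightarrow> 'a \<Rightarrow> 'a) \<Rightarrow> nat \<Rightarrow> 'a list set" where
  "subst_lang th l = {w. \<exists>n a u v. subst_word th l n a = u @ w @ v}"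

definition subst_shift :: "(nat \<Rightarrow> 'a \<Rightarrow> 'a) \<Rightarrow> nat \<Rightarrow> (int \<Rightarrow> 'a) set" where
  "subst_shift th l = {x. \<forall>m (k::nat). map (\<lambda>i. x (m + int i)) [0..<k] \<in> subst_lang th l}"

definition aperiodic :: "(nat \<Rightarrow> 'a \<Rightarrow> 'a) \<Rightarrow> nat \<Rightarrow> bool" where
  "aperiodic th l \<longleftrightarrow> (\<forall>x\<in>subst_shift th l. \<not> (\<exists>p>0. \<forall>m. x (m + int p) = x m))"

text \<open>Action of th^n on two-sided sequences (position 0 is the start of th^n(x 0)).\<close>
definition subst_seq :: "(nat \<Rightarrow> 'a \<Rightarrow> 'a) \<Rightarrow> nat \<Rightarrow> nat \<Rightarrow> (int \<Rightarrow> 'a) \<Rightarrow> int \<Rightarrow> 'a" where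
  "subst_seq th l n x m = col th l n (nat (m mod int (l ^ n))) (x (m div int (l ^ n)))"

definition column_rank :: "(nat \<Rightarrow> 'a \<Rightarrow> 'a) \<Rightarrow> nat \<Rightarrow> nat" where
  "column_rank th l = (LEAST r. \<exists>n\<ge>1. \<exists>i<l ^ n. card (range (col th l n i)) = r)"

definition quasi_bijective :: "(nat \<Rightarrow> 'a \<Rightarrow> 'a) \<Rightarrow> nat \<Rightarrow> bool" where
  "quasi_bijective th l \<longleftrightarrow>
     (\<exists>n\<ge>1. \<forall>i<l ^ n. card (range (col th l n i)) = column_rank th l)"

definition periodic_point :: "(nat \<Rightarrow> 'a \<Rightarrow> 'a) \<Rightarrow> nat \<Rightarrow> (int \<Rightarrow> 'a) \<Rightarrow> bool" where
  "periodic_point th l x \<longleftrightarrow> x \<in> subst_shift th l \<and> (\<exists>p\<ge>1. subst_seq th l p x = x)"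

definition fixed_point :: "(nat \<Rightarrow> 'a \<Rightarrow> 'a) \<Rightarrow> nat \<Rightarrow> (int \<Rightarrow> 'a) \<Rightarrow> bool" where
  "fixed_point th l x \<longleftrightarrow> x \<in> subst_shift th l \<and> subst_seq th l 1 x = x"

definition simplified_form :: "(nat \<Rightarrow> 'a \<Rightarrow> 'a) \<Rightarrow> nat \<Rightarrow> bool" where
  "simplified_form th l \<longleftrightarrow>
     (\<forall>i<l. card (range (th i)) = column_rank th l) \<and>
     (\<forall>x. periodic_point th l x \<longrightarrow> fixed_point th l x)"

inductive_set semigrp :: "(nat \<Rightarrow> 'a \<Rightarrow> 'a) \<Rightarrow> nat \<Rightarrow> ('a \<Rightarrow> 'a) set"
  for th l where
  gen: "n \<ge> 1 \<Longrightarrow> i < l ^ n \<Longrightarrow> col th l n i \<in> semigrp th l"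
| comp: "f \<in> semigrp th l \<Longrightarrow> g \<in> semigrp th l \<Longrightarrow> f \<circ> g \<in> semigrp th l"

definition e_plus :: "(nat \<Rightarrow> 'a \<Rightarrow> 'a) \<Rightarrow> nat \<Rightarrow> 'a \<Rightarrow> 'a" where
  "e_plus th l = th 0"

definition e_minus :: "(nat \<Rightarrow> 'a \<Rightarrow> 'a) \<Rightarrow> nat \<Rightarrow> 'a \<Rightarrow> 'a" where
  "e_minus th l = th (l - 1)"

text \<open>Green's R- and L-classes in S (with S^1 = S plus identity).\<close>
definition R_class :: "('a \<Rightarrow> 'a) set \<Rightarrow> ('a \<Rightarrow> 'a) \<Rightarrow> ('a \<Rightarrow> 'a) set" where
  "R_class S x = {y \<in> S. (\<lambda>u. y \<circ> u) ` (insert id S) = (\<lambda>u. x \<circ> u) ` (insert id S)}"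

definition L_class :: "('a \<Rightarrow> 'a) set \<Rightarrow> ('a \<Rightarrow> 'a) \<Rightarrow> ('a \<Rightarrow> 'a) set" where
  "L_class S x = {y \<in> S. (\<lambda>u. u \<circ> y) ` (insert id S) = (\<lambda>u. u \<circ> x) ` (insert id S)}"

definition H_plus :: "(nat \<Rightarrow> 'a \<Rightarrow> 'a) \<Rightarrow> nat \<Rightarrow> ('a \<Rightarrow> 'a) set" where
  "H_plus th l = (\<lambda>s. e_plus th l \<circ> s \<circ> e_plus th l) ` semigrp th l"

definition H_minus :: "(nat \<Rightarrow> 'a \<Rightarrow> 'a) \<Rightarrow> nat \<Rightarrow> ('a \<Rightarrow> 'a) set" where
  "H_minus th l = (\<lambda>s. e_minus th l \<circ> s \<circ> e_minus th l) ` semigrp th l"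

definition H_plus_minus :: "(nat \<Rightarrow> 'a \<Rightarrow> 'a) \<Rightarrow> nat \<Rightarrow> ('a \<Rightarrow> 'a) set" where
  "H_plus_minus th l = R_class (semigrp th l) (e_plus th l) \<inter> L_class (semigrp th l) (e_minus th l)"

definition H_minus_plus :: "(nat \<Rightarrow> 'a \<Rightarrow> 'a) \<Rightarrow> nat \<Rightarrow> ('a \<Rightarrow> 'a) set" where
  "H_minus_plus th l = R_class (semigrp th l) (e_minus th l) \<inter> L_class (semigrp th l) (e_plus th l)"

definition consecutive :: "(nat \<Rightarrow> 'a \<Rightarrow> 'a) \<Rightarrow> nat \<Rightarrow> ('a \<Rightarrow> 'a) \<Rightarrow> ('a \<Rightarrow> 'a) \<Rightarrow> bool" where
  "consecutive th l L R \<longleftrightarrow>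
     (\<exists>n>0. \<exists>i. 0 < i \<and> i < l ^ n \<and> L = col th l n (i - 1) \<and> R = col th l n i)"

definition S2 :: "(nat \<Rightarrow> 'a \<Rightarrow> 'a) \<Rightarrow> nat \<Rightarrow> (('a \<Rightarrow> 'a) \<times> ('a \<Rightarrow> 'a)) set" where
  "S2 th l = {(L, R). consecutive th l L R \<and> L \<in> H_minus_plus th l \<and> R \<in> H_plus th l}"

definition S2_minus :: "(nat \<Rightarrow> 'a \<Rightarrow> 'a) \<Rightarrow> nat \<Rightarrow> (('a \<Rightarrow> 'a) \<times> ('a \<Rightarrow> 'a)) set" where
  "S2_minus th l = {(L, R). consecutive th l L R \<and> L \<in> H_minus th l \<and> R \<in> H_plus_minus th l}"

end

theory Submission imports Defs begin

definition keq :: "('a \<Rightarrow> 'b) \<Rightarrow> ('a \<Rightarrow> 'c) \<Rightarrow> bool" where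
  "keq f g \<longleftrightarrow> (\<forall>a b. f a = f b \<longleftrightarrow> g a = g b)"

lemma keq_refl: "keq f f" by (simp add: keq_def)
lemma keq_sym: "keq f g \<Longrightarrow> keq g f" by (simp add: keq_def)
lemma keq_trans: "keq f g \<Longrightarrow> keq g h \<Longrightarrow> keq f h" by (simp add: keq_def)

locale unif =
  fixes S :: "('a::finite \<Rightarrow> 'a) set" and c :: nat
  assumes closed: "f \<in> S \<Longrightarrow> g \<in> S \<Longrightarrow> f \<circ> g \<in> S"
    and rank: "f \<in> S \<Longrightarrow> card (range f) = c"
begin

lemma rng_comp: assumes "f \<in> S" "g \<in> S" shows "range (f \<circ> g) = range f"
proof -
  have "range (f \<circ> g) \<subseteq> range f" by auto
  moreover have "card (range (f \<circ> g)) = card (range f)" using rank closed assms by metis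
  ultimately show ?thesis by (metis card_subset_eq finite)
qed

lemma ker_comp: assumes "f \<in> S" "g \<in> S" shows "keq (f \<circ> g) g"
proof -
  have "card (f ` range g) = card (range g)"
    using rank closed assms by (metis image_comp)
  hence "inj_on f (range g)" by (simp add: eq_card_imp_inj_on)
  thus ?thesis unfolding keq_def by (auto dest: inj_onD)
qed

lemma pow_comp_in: "x \<in> S \<Longrightarrow> y \<in> S \<Longrightarrow> (x ^^ q) \<circ> y \<in> S"
  by (induction q) (auto simp: o_assoc[symmetric] intro: closed)

lemma comp_pow_in: "x \<in> S \<Longrightarrow> y \<in> S \<Longrightarrow> y \<circ> (x ^^ q) \<in> S"
  proof (induction q)
  case (Suc q)
  have "y \<circ> x ^^ Suc q = (y \<circ> x ^^ q) \<circ> x" by (simp add: funpow_Suc_right o_assoc del: funpow.simps)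
  thus ?case using Suc closed by metis
qed simp

lemma pow_in: "x \<in> S \<Longrightarrow> x ^^ Suc k \<in> S"
  using pow_comp_in[of x x k] by (simp add: funpow_Suc_right del: funpow.simps)

lemma period: assumes x: "x \<in> S" shows "\<exists>p\<ge>1. \<forall>a\<in>range x. (x ^^ p) a = a"
proof -
  have "\<not> inj (\<lambda>k::nat. x ^^ k)"
  proof
    assume "inj (\<lambda>k::nat. x ^^ k)"
    hence "infinite (range (\<lambda>k::nat. x ^^ k))" using finite_imageD infinite_UNIV_nat by blast
    thus False by simp
  qed
  then obtain i j where ij: "i \<noteq> j" "x ^^ i = x ^^ j" unfolding inj_def by blast
  then obtain i j where ij: "i < j" "x ^^ i = x ^^ j"
    by (metis linorder_neqE_nat)
  have r: "range (x ^^ Suc i) = range x"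
    using rng_comp[OF x pow_in[OF x, of i]] pow_in[OF x, of i]
    by (metis funpow_Suc_right funpow.simps(2) rng_comp x)
  show ?thesis
  proof (intro exI[of _ "j - i"] conjI ballI)
    show "1 \<le> j - i" using ij by simp
    fix a assume "a \<in> range x"
    then obtain b where b: "b \<in> range x" "a = (x ^^ i) b" using r
      by (metis (no_types, lifting) funpow_Suc_right image_comp image_iff rangeI)
    have "(x ^^ (j - i)) a = (x ^^ (j - i + i)) b" using b by (simp add: funpow_add)
    also have "\<dots> = (x ^^ j) b" using ij by simp
    also have "\<dots> = a" using ij b by simp
    finally show "(x ^^ (j - i)) a = a" .
  qed
qed

lemma pow_id_on: assumes x: "x \<in> S" "\<forall>a\<in>range x. (x ^^ p) a = a" "range y = range x"
  shows "(x ^^ p) \<circ> y = y"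
proof
  fix a
  have "y a \<in> range x" using assms(3) by (metis rangeI)
  thus "((x ^^ p) \<circ> y) a = y a" using assms(2) by (metis comp_apply)
qed

lemma right_div: assumes x: "x \<in> S" and y: "y \<in> S" and r: "range y = range x"
  shows "\<exists>u\<in>S. y = x \<circ> u"
proof -
  obtain p where p: "p \<ge> 1" "\<forall>a\<in>range x. (x ^^ p) a = a" using period[OF x] by blast
  then obtain q where q: "p = Suc q" by (cases p) auto
  have "y = (x ^^ p) \<circ> y" using pow_id_on[OF x p(2) r] by simp
  also have "\<dots> = x \<circ> ((x ^^ q) \<circ> y)" using q by (simp add: o_assoc)
  finally show ?thesis using pow_comp_in[OF x y] by blast
qed

lemma left_div: assumes x: "x \<in> S" and y: "y \<in> S" and k: "keq y x"
  shows "\<exists>u\<in>S. y = u \<circ> x"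
proof -
  obtain p where p: "p \<ge> 1" "\<forall>a\<in>range x. (x ^^ p) a = a" using period[OF x] by blast
  then obtain q where q: "p = Suc q" by (cases p) auto
  have "y = y \<circ> (x ^^ p)"
  proof
    fix a
    have "x ((x ^^ p) a) = (x ^^ p) (x a)" by (simp add: funpow_swap1)
    also have "\<dots> = x a" using p by simp
    finally show "y a = (y \<circ> x ^^ p) a" using k unfolding keq_def by simp
  qed
  also have "\<dots> = (y \<circ> (x ^^ q)) \<circ> x" using q by (simp add: o_assoc funpow_Suc_right del: funpow.simps)
  finally show ?thesis using comp_pow_in[OF x y] by blast
qed

lemma R_class_char: assumes x: "x \<in> S" shows "R_class S x = {y\<in>S. range y = range x}"
proof (intro set_eqI iffI)
  fix y assume "y \<in> R_class S x"
  hence y: "y \<in> S" and e: "(\<lambda>u. y \<circ> u) ` (insert id S) = (\<lambda>u. x \<circ> u) ` (insert id S)"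
    unfolding R_class_def by auto
  have "y \<circ> id \<in> (\<lambda>u. x \<circ> u) ` (insert id S)" using e by blast
  then obtain u where u: "u \<in> insert id S" "y \<circ> id = x \<circ> u" by (rule imageE)
  thus "y \<in> {y\<in>S. range y = range x}" using y rng_comp[OF x] by (cases "u = id") auto
next
  fix y assume "y \<in> {y\<in>S. range y = range x}"
  hence y: "y \<in> S" and r: "range y = range x" by auto
  obtain u where u: "u \<in> S" "y = x \<circ> u" using right_div[OF x y r] by blast
  obtain v where v: "v \<in> S" "x = y \<circ> v" using right_div[OF y x r[symmetric]] by blast
  have "(\<lambda>u. y \<circ> u) ` (insert id S) \<subseteq> (\<lambda>u. x \<circ> u) ` (insert id S)"
  proof
    fix z assume "z \<in> (\<lambda>u. y \<circ> u) ` (insert id S)"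
    then obtain w where "w \<in> insert id S" "z = y \<circ> w" by (rule imageE)
    hence "z = x \<circ> (u \<circ> w)" "u \<circ> w \<in> S" using u closed by (auto simp: o_assoc)
    thus "z \<in> (\<lambda>u. x \<circ> u) ` (insert id S)" by blast
  qed
  moreover have "(\<lambda>u. x \<circ> u) ` (insert id S) \<subseteq> (\<lambda>u. y \<circ> u) ` (insert id S)"
  proof
    fix z assume "z \<in> (\<lambda>u. x \<circ> u) ` (insert id S)"
    then obtain w where "w \<in> insert id S" "z = x \<circ> w" by (rule imageE)
    hence "z = y \<circ> (v \<circ> w)" "v \<circ> w \<in> S" using v closed by (auto simp: o_assoc)
    thus "z \<in> (\<lambda>u. y \<circ> u) ` (insert id S)" by blast
  qed
  ultimately show "y \<in> R_class S x" unfolding R_class_def using y by blast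
qed

lemma L_class_char: assumes x: "x \<in> S" shows "L_class S x = {y\<in>S. keq y x}"
proof (intro set_eqI iffI)
  fix y assume "y \<in> L_class S x"
  hence y: "y \<in> S" and e: "(\<lambda>u. u \<circ> y) ` (insert id S) = (\<lambda>u. u \<circ> x) ` (insert id S)"
    unfolding L_class_def by auto
  have "id \<circ> y \<in> (\<lambda>u. u \<circ> x) ` (insert id S)" using e by blast
  then obtain u where u: "u \<in> insert id S" "id \<circ> y = u \<circ> x" by (rule imageE)
  thus "y \<in> {y\<in>S. keq y x}" using y ker_comp[OF _ x] keq_refl by (cases "u = id") auto
next
  fix y assume "y \<in> {y\<in>S. keq y x}"
  hence y: "y \<in> S" and r: "keq y x" by auto
  obtain u where u: "u \<in> S" "y = u \<circ> x" using left_div[OF x y r] by blast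
  obtain v where v: "v \<in> S" "x = v \<circ> y" using left_div[OF y x keq_sym[OF r]] by blast
  have "(\<lambda>u. u \<circ> y) ` (insert id S) \<subseteq> (\<lambda>u. u \<circ> x) ` (insert id S)"
  proof
    fix z assume "z \<in> (\<lambda>u. u \<circ> y) ` (insert id S)"
    then obtain w where "w \<in> insert id S" "z = w \<circ> y" by (rule imageE)
    hence "z = (w \<circ> u) \<circ> x" "w \<circ> u \<in> S" using u closed by (auto simp: o_assoc)
    thus "z \<in> (\<lambda>u. u \<circ> x) ` (insert id S)" by blast
  qed
  moreover have "(\<lambda>u. u \<circ> x) ` (insert id S) \<subseteq> (\<lambda>u. u \<circ> y) ` (insert id S)"
  proof
    fix z assume "z \<in> (\<lambda>u. u \<circ> x) ` (insert id S)"
    then obtain w where "w \<in> insert id S" "z = w \<circ> x" by (rule imageE)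
    hence "z = (w \<circ> v) \<circ> y" "w \<circ> v \<in> S" using v closed by (auto simp: o_assoc)
    thus "z \<in> (\<lambda>u. u \<circ> y) ` (insert id S)" by blast
  qed
  ultimately show "y \<in> L_class S x" unfolding L_class_def using y by blast
qed

lemma sandwich_char: assumes e: "e \<in> S"
  shows "(\<lambda>s. e \<circ> s \<circ> e) ` S = {y\<in>S. range y = range e \<and> keq y e}"
proof (intro set_eqI iffI)
  fix y assume "y \<in> (\<lambda>s. e \<circ> s \<circ> e) ` S"
  then obtain s where s: "s \<in> S" "y = e \<circ> s \<circ> e" by auto
  have es: "e \<circ> s \<in> S" and se: "s \<circ> e \<in> S" using s e closed by auto
  have "y = e \<circ> (s \<circ> e)" using s by (simp add: comp_assoc)
  hence "y \<in> S" "range y = range e" using rng_comp[OF e se] closed[OF e se] by auto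
  moreover have "keq y e" using ker_comp[OF es e] s by simp
  ultimately show "y \<in> {y\<in>S. range y = range e \<and> keq y e}" by auto
next
  fix y assume "y \<in> {y\<in>S. range y = range e \<and> keq y e}"
  hence y: "y \<in> S" and r: "range y = range e" and k: "keq y e" by auto
  obtain p where p: "p \<ge> 1" "\<forall>a\<in>range e. (e ^^ p) a = a" using period[OF e] by blast
  then obtain q where q: "p = Suc q" by (cases p) auto
  have 1: "y = (e ^^ p) \<circ> y" using pow_id_on[OF e p(2) r] by simp
  have 2: "y = y \<circ> (e ^^ p)"
  proof
    fix a
    have "e ((e ^^ p) a) = (e ^^ p) (e a)" by (simp add: funpow_swap1)
    also have "\<dots> = e a" using p by simp
    finally show "y a = (y \<circ> e ^^ p) a" using k unfolding keq_def by simp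
  qed
  have "y = (e ^^ p) \<circ> y \<circ> (e ^^ p)" using 1 2 by simp
  also have "\<dots> = e \<circ> ((e ^^ q) \<circ> y \<circ> (e ^^ q)) \<circ> e" using q
    by (simp add: o_assoc funpow_Suc_right del: funpow.simps) (simp add: comp_assoc funpow_swap1 fun_eq_iff)
  finally show "y \<in> (\<lambda>s. e \<circ> s \<circ> e) ` S" using comp_pow_in[OF e pow_comp_in[OF e y]] by blast
qed

lemma cancel: assumes g: "g \<in> S" and k1: "keq f g" and k2: "keq f' g" and r: "range h = range g"
  and eq: "f \<circ> h = f' \<circ> h" shows "f = f'"
proof
  fix a
  have "g ` range g = range g" using rng_comp[OF g g] by (simp add: image_comp)
  then obtain t where t: "t \<in> range g" "g t = g a" by (metis imageE rangeI)
  then obtain b where b: "t = h b" using r by auto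
  have "f a = f t" using k1 t unfolding keq_def by simp
  also have "\<dots> = f' t" using eq b by (metis comp_apply)
  also have "\<dots> = f' a" using k2 t unfolding keq_def by simp
  finally show "f a = f' a" .
qed

end

lemma l_pos: assumes "primitive th l" shows "0 < l"
proof (rule ccontr)
  assume "\<not> 0 < l" hence l: "l = 0" by simp
  obtain n where "n \<ge> 1" "\<forall>a b. b \<in> set (subst_word th l n a)" using assms unfolding primitive_def by blast
  moreover have "l ^ n = 0" using l \<open>n \<ge> 1\<close> by simp
  ultimately show False unfolding subst_word_def by simp
qed

lemma col_mult: assumes "0 < l" shows "i < l ^ n \<Longrightarrow> col th l n i \<circ> col th l m j = col th l (n + m) (i + l ^ n * j)"
proof (induction n arbitrary: i)
  case 0 thus ?case by simp
next
  case (Suc n)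
  have m: "(i + l ^ Suc n * j) mod l = i mod l" by (simp add: mult.assoc)
  have d: "(i + l ^ Suc n * j) div l = i div l + l ^ n * j" using assms by (simp add: mult.assoc)
  have "i div l < l ^ n" using Suc.prems assms by (simp add: less_mult_imp_div_less mult.commute)
  hence "col th l n (i div l) \<circ> col th l m j = col th l (n + m) (i div l + l ^ n * j)" using Suc.IH by blast
  hence "th (i mod l) \<circ> (col th l n (i div l) \<circ> col th l m j) = th (i mod l) \<circ> col th l (n + m) (i div l + l ^ n * j)" by simp
  thus ?case using m d by (simp add: o_assoc fun_eq_iff)
qed

lemma col_bound: assumes "i < (l::nat) ^ n" "j < l ^ m" shows "i + l ^ n * j < l ^ (n + m)"
proof -
  have "i + l ^ n * j < l ^ n * (j + 1)" using assms by simp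
  also have "\<dots> \<le> l ^ n * l ^ m" using assms by (intro mult_le_mono2) simp
  finally show ?thesis by (simp add: power_add)
qed

lemma semigrp_col: assumes "0 < l" shows "f \<in> semigrp th l \<Longrightarrow> \<exists>m j. m \<ge> 1 \<and> j < l ^ m \<and> f = col th l m j"
proof (induction rule: semigrp.induct)
  case (gen n i) thus ?case by blast
next
  case (comp f g)
  then obtain m j m' j' where "m \<ge> 1" "j < l ^ m" "f = col th l m j" "m' \<ge> 1" "j' < l ^ m'" "g = col th l m' j'" by blast
  thus ?case using col_mult[OF assms] col_bound by (metis le_add1 order_trans)
qed

lemma rank_col: fixes th :: "nat \<Rightarrow> 'a::finite \<Rightarrow> 'a" assumes sf: "simplified_form th l" and l: "0 < l" and m: "m \<ge> 1" "j < l ^ m"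
  shows "card (range (col th l m j)) = column_rank th l"
proof (rule antisym)
  obtain m' where m': "m = Suc m'" using m by (cases m) auto
  have "range (col th l m j) \<subseteq> range (th (j mod l))" using m' by auto
  hence "card (range (col th l m j)) \<le> card (range (th (j mod l)))" by (rule card_mono[OF finite])
  also have "\<dots> = column_rank th l" using sf l unfolding simplified_form_def by simp
  finally show "card (range (col th l m j)) \<le> column_rank th l" .
  show "column_rank th l \<le> card (range (col th l m j))"
    unfolding column_rank_def by (rule Least_le) (use m in blast)
qed

lemma unif_semigrp: fixes th :: "nat \<Rightarrow> 'a::finite \<Rightarrow> 'a" assumes "simplified_form th l" "0 < l" shows "unif (semigrp th l) (column_rank th l)"
proof
  fix f g assume "f \<in> semigrp th l" "g \<in> semigrp th l" thus "f \<circ> g \<in> semigrp th l" by (rule semigrp.comp)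
next
  fix f assume "f \<in> semigrp th l"
  thus "card (range f) = column_rank th l" using semigrp_col[OF assms(2)] rank_col[OF assms] by blast
qed

lemma ep_in: assumes "0 < l" shows "e_plus th l \<in> semigrp th l"
proof -
  have "col th l 1 0 \<in> semigrp th l" using assms by (intro semigrp.gen) auto
  thus ?thesis unfolding e_plus_def by simp
qed

lemma em_in: assumes "0 < l" shows "e_minus th l \<in> semigrp th l"
proof -
  have "col th l 1 (l - 1) \<in> semigrp th l" using assms by (intro semigrp.gen) auto
  thus ?thesis unfolding e_minus_def using assms by simp
qed

lemma consec_mult: assumes l: "0 < l" and c: "consecutive th l L R" and p: "\<psi> \<in> semigrp th l"
  shows "consecutive th l (L \<circ> \<psi>) (R \<circ> \<psi>)"
proof -
  obtain n i where ni: "n > 0" "0 < i" "i < l ^ n" "L = col th l n (i - 1)" "R = col th l n i"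
    using c unfolding consecutive_def by blast
  obtain m j where mj: "m \<ge> 1" "j < l ^ m" "\<psi> = col th l m j" using semigrp_col[OF l p] by blast
  have "i - 1 < l ^ n" using ni by simp
  hence 1: "L \<circ> \<psi> = col th l (n + m) (i - 1 + l ^ n * j)" using ni mj col_mult[OF l, of "i - 1" n th m j] by simp
  have 2: "R \<circ> \<psi> = col th l (n + m) (i + l ^ n * j)" using ni mj col_mult[OF l, of i n th m j] by simp
  have 4: "i - 1 + l ^ n * j = i + l ^ n * j - 1" using ni by simp
  have 3: "i + l ^ n * j < l ^ (n + m)" using col_bound ni mj by blast
  show ?thesis unfolding consecutive_def
    by (rule exI[of _ "n + m"], rule conjI, use ni in simp, rule exI[of _ "i + l ^ n * j"])
       (use 1 2 3 4 ni in auto)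
qed

theorem mainTheorem19:
  fixes th :: "nat \<Rightarrow> 'a::finite \<Rightarrow> 'a" and l :: nat
  assumes "primitive th l" and "aperiodic th l"
    and "quasi_bijective th l" and "simplified_form th l"
  shows "(\<forall>L R \<psi>. (L, R) \<in> S2 th l \<and> \<psi> \<in> H_minus_plus th l \<union> H_plus th l
             \<longrightarrow> (L \<circ> \<psi>, R \<circ> \<psi>) \<in> S2 th l) \<and>
         (\<forall>\<phi>\<in>H_plus_minus th l.
           bij_betw (\<lambda>(L, R). (L \<circ> \<phi>, R \<circ> \<phi>)) (S2 th l) (S2_minus th l))"
proof -
  have l: "0 < l" using l_pos assms(1) by blast
  define S where "S = semigrp th l"
  define ep where "ep = e_plus th l"
  define em where "em = e_minus th l"
  interpret U: unif S "column_rank th l" unfolding S_def using unif_semigrp assms(4) l by blast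
  have ep: "ep \<in> S" unfolding S_def ep_def using ep_in l by blast
  have em: "em \<in> S" unfolding S_def em_def using em_in l by blast
  have Hp: "H_plus th l = {y\<in>S. range y = range ep \<and> keq y ep}"
    unfolding H_plus_def S_def[symmetric] ep_def[symmetric] using U.sandwich_char[OF ep] .
  have Hm: "H_minus th l = {y\<in>S. range y = range em \<and> keq y em}"
    unfolding H_minus_def S_def[symmetric] em_def[symmetric] using U.sandwich_char[OF em] .
  have Hmp: "H_minus_plus th l = {y\<in>S. range y = range em \<and> keq y ep}"
    unfolding H_minus_plus_def S_def[symmetric] em_def[symmetric] ep_def[symmetric]
    using U.R_class_char[OF em] U.L_class_char[OF ep] by auto
  have Hpm: "H_plus_minus th l = {y\<in>S. range y = range ep \<and> keq y em}"
    unfolding H_plus_minus_def S_def[symmetric] em_def[symmetric] ep_def[symmetric]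
    using U.R_class_char[OF ep] U.L_class_char[OF em] by auto
  have S2: "S2 th l = {(L, R). consecutive th l L R \<and> (L\<in>S \<and> range L = range em \<and> keq L ep)
      \<and> (R\<in>S \<and> range R = range ep \<and> keq R ep)}"
    unfolding S2_def Hmp Hp by auto
  have S2m: "S2_minus th l = {(L, R). consecutive th l L R \<and> (L\<in>S \<and> range L = range em \<and> keq L em)
      \<and> (R\<in>S \<and> range R = range ep \<and> keq R em)}"
    unfolding S2_minus_def Hm Hpm by auto
  have cm: "consecutive th l (L \<circ> \<psi>) (R \<circ> \<psi>)" if "consecutive th l L R" "\<psi> \<in> S" for L R \<psi>
    using consec_mult[OF l] that unfolding S_def by blast
  have mulS: "f \<circ> g \<in> S \<and> range (f \<circ> g) = range f \<and> keq (f \<circ> g) g" if "f \<in> S" "g \<in> S" for f g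
    using that U.closed U.rng_comp U.ker_comp by blast
  show ?thesis
  proof (intro conjI allI impI ballI)
    fix L R \<psi> assume a: "(L, R) \<in> S2 th l \<and> \<psi> \<in> H_minus_plus th l \<union> H_plus th l"
    hence p: "\<psi> \<in> S" "keq \<psi> ep" unfolding Hmp Hp by auto
    from a have LR: "consecutive th l L R" "L\<in>S" "range L = range em" "keq L ep"
      "R\<in>S" "range R = range ep" "keq R ep" unfolding S2 by auto
    show "(L \<circ> \<psi>, R \<circ> \<psi>) \<in> S2 th l" unfolding S2
      using LR p cm[OF LR(1) p(1)] mulS[OF LR(2) p(1)] mulS[OF LR(5) p(1)] keq_trans[OF _ p(2)] by auto
  next
    fix \<phi> assume "\<phi> \<in> H_plus_minus th l"
    hence ph: "\<phi> \<in> S" "range \<phi> = range ep" "keq \<phi> em" unfolding Hpm by auto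
    show "bij_betw (\<lambda>(L, R). (L \<circ> \<phi>, R \<circ> \<phi>)) (S2 th l) (S2_minus th l)"
      unfolding bij_betw_def
    proof (intro conjI)
      show "inj_on (\<lambda>(L, R). (L \<circ> \<phi>, R \<circ> \<phi>)) (S2 th l)"
      proof (rule inj_onI)
        fix x y assume xy: "x \<in> S2 th l" "y \<in> S2 th l"
          "(\<lambda>(L, R). (L \<circ> \<phi>, R \<circ> \<phi>)) x = (\<lambda>(L, R). (L \<circ> \<phi>, R \<circ> \<phi>)) y"
        obtain L R L' R' where xs: "x = (L, R)" "y = (L', R')" by (cases x, cases y) auto
        have a: "L \<circ> \<phi> = L' \<circ> \<phi>" "R \<circ> \<phi> = R' \<circ> \<phi>" using xy(3) xs by auto
        have k: "keq L ep" "keq L' ep" "keq R ep" "keq R' ep" using xy(1,2) xs unfolding S2 by auto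
        have "L = L'" using U.cancel[OF ep k(1) k(2) ph(2) a(1)] .
        moreover have "R = R'" using U.cancel[OF ep k(3) k(4) ph(2) a(2)] .
        ultimately show "x = y" using xs by simp
      qed
      show "(\<lambda>(L, R). (L \<circ> \<phi>, R \<circ> \<phi>)) ` S2 th l = S2_minus th l"
      proof (intro set_eqI iffI)
        fix x assume "x \<in> (\<lambda>(L, R). (L \<circ> \<phi>, R \<circ> \<phi>)) ` S2 th l"
        then obtain L R where x: "x = (L \<circ> \<phi>, R \<circ> \<phi>)" and "(L, R) \<in> S2 th l" by auto
        hence LR: "consecutive th l L R" "L\<in>S" "range L = range em" "keq L ep"
          "R\<in>S" "range R = range ep" "keq R ep" unfolding S2 by auto
        show "x \<in> S2_minus th l" unfolding S2m x
          using LR ph cm[OF LR(1) ph(1)] mulS[OF LR(2) ph(1)] mulS[OF LR(5) ph(1)] keq_trans[OF _ ph(3)] by auto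
      next
        fix x assume "x \<in> S2_minus th l"
        then obtain L' R' where x: "x = (L', R')" and LR: "consecutive th l L' R'" "L'\<in>S" "range L' = range em" "keq L' em"
          "R'\<in>S" "range R' = range ep" "keq R' em" unfolding S2m by auto
        define g where "g = \<phi> \<circ> ep"
        have g: "g \<in> S" "range g = range \<phi>" using mulS[OF ph(1) ep] unfolding g_def by auto
        obtain p where p: "p \<ge> 1" "\<forall>a\<in>range g. (g ^^ p) a = a" using U.period[OF g(1)] by blast
        have pp: "\<forall>a\<in>range g. (g ^^ (p + p)) a = a" using p by (simp add: funpow_add)
        define q where "q = p + p - 2"
        have q: "p + p = Suc (Suc q)" using p unfolding q_def by simp
        define \<psi> where "\<psi> = ep \<circ> ((g ^^ q) \<circ> (\<phi> \<circ> ep))"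
        have ps: "\<psi> \<in> S" unfolding \<psi>_def using U.closed[OF ep U.pow_comp_in[OF g(1) mulS[OF ph(1) ep, THEN conjunct1]]] .
        have e1: "\<psi> = (ep \<circ> ((g ^^ q) \<circ> \<phi>)) \<circ> ep" unfolding \<psi>_def by (simp add: o_assoc)
        have "ep \<circ> ((g ^^ q) \<circ> \<phi>) \<in> S" using U.closed[OF ep U.pow_comp_in[OF g(1) ph(1)]] .
        hence "keq ((ep \<circ> ((g ^^ q) \<circ> \<phi>)) \<circ> ep) ep" by (rule U.ker_comp[OF _ ep])
        hence pk: "keq \<psi> ep" by (subst e1)
        have "\<phi> \<circ> \<psi> = g \<circ> (g ^^ q) \<circ> g" unfolding \<psi>_def g_def by (simp add: o_assoc)
        also have "\<dots> = g \<circ> (g ^^ q \<circ> g)" by (simp add: o_assoc)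
        also have "\<dots> = g ^^ Suc (Suc q)" by (metis funpow.simps(2) funpow_Suc_right)
        also have "\<dots> = g ^^ (p + p)" using q by simp
        finally have pg: "\<phi> \<circ> \<psi> = g ^^ (p + p)" .
        have fix1: "\<phi> (\<psi> (\<phi> a)) = \<phi> a" for a
        proof -
          have "\<phi> a \<in> range g" using g(2) by simp
          thus ?thesis using pp pg by (metis comp_apply)
        qed
        have kL: "keq L' \<phi>" "keq R' \<phi>" using LR ph keq_trans keq_sym by blast+
        have c1: "L' \<circ> \<psi> \<circ> \<phi> = L'" using kL fix1 unfolding keq_def by (auto simp: fun_eq_iff)
        have c2: "R' \<circ> \<psi> \<circ> \<phi> = R'" using kL fix1 unfolding keq_def by (auto simp: fun_eq_iff)
        have "(L' \<circ> \<psi>, R' \<circ> \<psi>) \<in> S2 th l" unfolding S2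
          using LR ps pk cm[OF LR(1) ps] mulS[OF LR(2) ps] mulS[OF LR(5) ps] keq_trans[OF _ pk] by auto
        moreover have "x = (\<lambda>(L, R). (L \<circ> \<phi>, R \<circ> \<phi>)) (L' \<circ> \<psi>, R' \<circ> \<psi>)" using x c1 c2 by simp
        ultimately show "x \<in> (\<lambda>(L, R). (L \<circ> \<phi>, R \<circ> \<phi>)) ` S2 th l" by blast
      qed
    qed
  qed
qed

end
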